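(* Let $\lambda\ne0$, let $r\ge1$ and $a_1,\dots,a_r\ge1$ be integers, and let $G$ be the threshold graph with block sequence $0^{a_1}1^{a_2}0^{a_3}\cdots b_r^{a_r}$ and bags $B_1,\dots,B_r$. Define $p_i,\epsilon_i$ by: $p_i=0,\epsilon_i=0$ if $i\equiv1$; $p_i=\frac{\lambda(a_i-1)}{a_i},\epsilon_i=-\frac{\lambda}{a_i}$ if $i\equiv2$; $p_i=\lambda,\epsilon_i=0$ if $i\equiv3$; $p_i=\frac{\lambda}{a_i},\epsilon_i=\frac{\lambda}{a_i}$ if $i\equiv0\pmod4$. For $j$ even and $2\le i<j\le r$ set $\epsilon^{(1)}_{i,j}=\frac{\lambda}{\sqrt2^{\,j-i}}$ if $j\equiv2\pmod4$ and $\epsilon^{(1)}_{i,j}=\frac{-\lambda}{\sqrt2^{\,j-i}}$ if $j\equiv0\pmod4$; set $\epsilon^{(1)}_{1,2}=\lambda$ and $\epsilon^{(1)}_{1,j}=\epsilon^{(1)}_{2,j}$ for even $j$ with $4\le j\le r$. Let $M$ be the symmetric matrix indexed by $V(G)$ with $M_{vv}=p_i$ for $v\in B_i$; $M_{uv}=\epsilon_i$ for distinct $u,v\in B_i$, $i$ even; $M_{uv}=\epsilon^{(1)}_{i,j}/\sqrt{a_ia_j}$ for $u\in B_i,v\in B_j$, $i<j$, $j$ even; and $0$ otherwise. Then $M\in S(G)$, and writing $r=4k+q$ with $k\ge0$, $q\in\{0,1,2,3\}$, $A=\sum_{i\le r,\ i\equiv0,1\ (\mathrm{mod}\ 4)}(a_i-1)$,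 $B=\sum_{i\le r,\ i\equiv2,3\ (\mathrm{mod}\ 4)}(a_i-1)$, the spectrum of $M$ (with multiplicities in brackets) is: if $q=0$: $\{-\lambda^{[k]},0^{[A+k]},\lambda^{[B+k]},(2\lambda)^{[k]}\}$; if $q=1$: $\{-\lambda^{[k]},0^{[A+k+1]},\lambda^{[B+k]},(2\lambda)^{[k]}\}$; if $q=2$: $\{-\lambda^{[k+1]},0^{[A+k]},\lambda^{[B+k+1]},(2\lambda)^{[k]}\}$; if $q=3$: $\{-\lambda^{[k+1]},0^{[A+k]},\lambda^{[B+k+2]},(2\lambda)^{[k]}\}$.
   Context: Threshold graph with block sequence $0^{a_1}1^{a_2}0^{a_3}1^{a_4}\cdots b_r^{a_r}$ ($a_i\ge 1$, $b_i=0$ for $i$ odd and $b_i=1$ for $i$ even): its vertex set is partitioned into bags $B_1,\dots,B_r$ with $|B_i|=a_i$ (added in this order, the vertices of $B_i$ being added as isolated vertices if $i$ is odd and as dominating vertices if $i$ is even); two distinct vertices $u\in B_i$, $v\in B_j$ with $i\le j$ are adjacent if and only if $j$ is even. Every threshold graph has such a representation. For a simple graph $G$ on vertices $v_1,\dots,v_n$, $S(G)$ denotes the set of real symmetric $n\times n$ matrices whose off-diagonal entry $(i,j)$ is nonzero exactly when $\{v_i,v_j\}$ is an edge. A multiplicity $[0]$ means the eigenvalue does not occur. *)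

theory Defs
  imports "Jordan_Normal_Form.Char_Poly"
begin

text \<open>Block sequence given as a list a = [a_1,...,a_r]. Vertices are 0..<n with
 n = sum_list a; vertex v lies in bag B_i (1-based i) iff
 sum_list (take (i-1) a) \<le> v < sum_list (take i a).\<close>

definition nverts :: "nat list \<Rightarrow> nat" where
  "nverts a = sum_list a"

definition bag :: "nat list \<Rightarrow> nat \<Rightarrow> nat" where
  "bag a v = (LEAST i. v < sum_list (take i a))"

definition thr_adj :: "nat list \<Rightarrow> nat \<Rightarrow> nat \<Rightarrow> bool" where
  "thr_adj a u v = (u \<noteq> v \<and> even (max (bag a u) (bag a v)))"

definition in_S :: "nat \<Rightarrow> (nat \<Rightarrow> nat \<Rightarrow> bool) \<Rightarrow> real mat \<Rightarrow> bool" where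
  "in_S n E M = (M \<in> carrier_mat n n \<and> transpose_mat M = M \<and>
     (\<forall>i<n. \<forall>j<n. i \<noteq> j \<longrightarrow> (M $$ (i,j) \<noteq> 0 \<longleftrightarrow> E i j)))"

definition asz :: "nat list \<Rightarrow> nat \<Rightarrow> real" where
  "asz a i = real (a ! (i - 1))"

definition pdiag :: "real \<Rightarrow> nat list \<Rightarrow> nat \<Rightarrow> real" where
  "pdiag l a i = (if i mod 4 = 1 then 0
     else if i mod 4 = 2 then l * (asz a i - 1) / asz a i
     else if i mod 4 = 3 then l
     else l / asz a i)"

definition epsb :: "real \<Rightarrow> nat list \<Rightarrow> nat \<Rightarrow> real" where
  "epsb l a i = (if i mod 4 = 1 then 0
     else if i mod 4 = 2 then - l / asz a i
     else if i mod 4 = 3 then 0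
     else l / asz a i)"

text \<open>epsilon^(1)_{i,j}, meaningful for i < j, j even.\<close>
definition eps1 :: "real \<Rightarrow> nat \<Rightarrow> nat \<Rightarrow> real" where
  "eps1 l i j = (if i = 1 \<and> j = 2 then l
     else (let i' = max i 2 in
       if j mod 4 = 2 then l / sqrt 2 ^ (j - i') else - l / sqrt 2 ^ (j - i')))"

definition Mthr :: "real \<Rightarrow> nat list \<Rightarrow> real mat" where
  "Mthr l a = mat (nverts a) (nverts a) (\<lambda>(u,v).
     let i = bag a u; j = bag a v in
     if u = v then pdiag l a i
     else if i = j then (if even i then epsb l a i else 0)
     else if i < j then (if even j then eps1 l i j / sqrt (asz a i * asz a j) else 0)
     else (if even i then eps1 l j i / sqrt (asz a j * asz a i) else 0))"

end

theory Submission
  imports Defs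
begin


lemma diag_charpoly:
  fixes M :: "real mat" and vs :: "nat \<Rightarrow> real vec" and ev :: "nat \<Rightarrow> real"
  assumes M: "M \<in> carrier_mat n n"
    and dv: "\<And>w. w < n \<Longrightarrow> vs w \<in> carrier_vec n"
    and eig: "\<And>w. w < n \<Longrightarrow> M *\<^sub>v vs w = ev w \<cdot>\<^sub>v vs w"
    and orth: "\<And>w w'. w < n \<Longrightarrow> w' < n \<Longrightarrow> w \<noteq> w' \<Longrightarrow> vs w \<bullet> vs w' = 0"
    and nz: "\<And>w. w < n \<Longrightarrow> vs w \<bullet> vs w \<noteq> 0"
  shows "char_poly M = (\<Prod>w\<leftarrow>[0..<n]. [:- ev w, 1:])"
proof -
  define P where "P = mat n n (\<lambda>(i,w). vs w $ i)"
  define P' where "P' = mat n n (\<lambda>(w,i). vs w $ i / (vs w \<bullet> vs w))"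
  define D where "D = mat n n (\<lambda>(i,j). if i = j then ev i else (0::real))"
  have P: "P \<in> carrier_mat n n" and P': "P' \<in> carrier_mat n n" and D: "D \<in> carrier_mat n n"
    by (auto simp: P_def P'_def D_def)
  have colP: "col P w = vs w" if "w < n" for w
    using dv[OF that] that by (auto simp: P_def intro!: eq_vecI)
  have P'P: "P' * P = 1\<^sub>m n"
  proof (rule eq_matI)
    fix i j assume ij: "i < dim_row (1\<^sub>m n)" "j < dim_col (1\<^sub>m n)"
    hence i: "i < n" and j: "j < n" by auto
    have "(P' * P) $$ (i,j) = row P' i \<bullet> col P j" using i j P P' by auto
    also have "\<dots> = (vs i \<bullet> vs j) / (vs i \<bullet> vs i)"
      using i j dv[OF i] dv[OF j] colP[OF j]
      by (simp add: scalar_prod_def P'_def sum_divide_distrib)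
    also have "\<dots> = 1\<^sub>m n $$ (i,j)"
      using orth[OF i j] nz[OF i] i j by auto
    finally show "(P' * P) $$ (i,j) = 1\<^sub>m n $$ (i,j)" .
  qed (use P P' in auto)
  have PP': "P * P' = 1\<^sub>m n" by (rule mat_mult_left_right_inverse[OF P' P P'P])
  have MP: "M * P = P * D"
  proof (rule eq_matI)
    fix i j assume ij: "i < dim_row (P * D)" "j < dim_col (P * D)"
    hence i: "i < n" and j: "j < n" using P D by auto
    have "(M * P) $$ (i,j) = row M i \<bullet> vs j" using i j M P colP[OF j] by auto
    also have "\<dots> = (M *\<^sub>v vs j) $ i" using i M by auto
    also have "\<dots> = ev j * vs j $ i" using eig[OF j] dv[OF j] i by auto
    also have "\<dots> = (P * D) $$ (i,j)"
    proof -
      have "(P * D) $$ (i,j) = (\<Sum>k<n. vs k $ i * (if k = j then ev k else 0))"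
        using i j P D by (auto simp: scalar_prod_def P_def D_def col_def row_def atLeast0LessThan)
      also have "\<dots> = vs j $ i * ev j" using j
        by (simp add: if_distrib[of "\<lambda>x. _ * x"] sum.delta cong: if_cong)
      finally show ?thesis by simp
    qed
    finally show "(M * P) $$ (i,j) = (P * D) $$ (i,j)" .
  qed (use M P D in auto)
  have "M = M * (P * P')" using M PP' by simp
  also have "\<dots> = (M * P) * P'" using M P P' by (simp add: assoc_mult_mat)
  also have "\<dots> = P * D * P'" using MP by simp
  finally have eq: "M = P * D * P'" .
  have "similar_mat M D" by (rule similar_matI[of M D P P' n]) (use M P P' D PP' P'P eq in auto)
  hence "char_poly M = char_poly D" by (rule char_poly_similar)
  also have "\<dots> = (\<Prod>a\<leftarrow>diag_mat D. [:- a, 1:])"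
    by (rule char_poly_upper_triangular[OF D]) (auto simp: upper_triangular_def D_def)
  also have "diag_mat D = map ev [0..<n]"
    by (auto simp: diag_mat_def D_def intro!: nth_equalityI)
  finally show ?thesis by (simp add: comp_def)
qed

lemma order_prod_lin:
  fixes ev :: "nat \<Rightarrow> real"
  shows "order x (\<Prod>w\<leftarrow>[0..<n]. [:- ev w, 1:]) = card {w. w < n \<and> ev w = x}"
proof (induction n)
  case 0 then show ?case by (simp add: order_0I)
next
  case (Suc n)
  have ne: "(\<Prod>w\<leftarrow>[0..<n]. [:- ev w, 1:]) \<noteq> 0"
    by (auto simp: prod_list_zero_iff)
  have "order x (\<Prod>w\<leftarrow>[0..<Suc n]. [:- ev w, 1:]) =
     order x ((\<Prod>w\<leftarrow>[0..<n]. [:- ev w, 1:]) * [:- ev n, 1:])" by simp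
  also have "\<dots> = card {w. w < n \<and> ev w = x} + order x [:- ev n, 1:]"
  proof -
    have "(\<Prod>w\<leftarrow>[0..<n]. [:- ev w, 1:]) * [:- ev n, 1:] \<noteq> 0" by (rule no_zero_divisors[OF ne]) simp
    thus ?thesis by (subst order_mult) (auto simp: Suc)
  qed
  also have "order x [:- ev n, 1:] = (if ev n = x then 1 else 0)"
    using order_power_n_n[of x 1] by (auto intro: order_0I)
  also have "card {w. w < n \<and> ev w = x} + (if ev n = x then 1 else 0) = card {w. w < Suc n \<and> ev w = x}"
  proof -
    have "{w. w < Suc n \<and> ev w = x} = {w. w < n \<and> ev w = x} \<union> (if ev n = x then {n} else {})"
      by (auto simp: less_Suc_eq)
    thus ?thesis by auto
  qed
  finally show ?case .
qed



definition uu :: "nat \<Rightarrow> real" where "uu i = sqrt 2 ^ max i 2"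
definition sg :: "nat \<Rightarrow> real" where "sg j = (if j mod 4 = 2 then 1 else -1)"
definition dd :: "nat \<Rightarrow> real" where "dd j = (if j mod 4 = 3 \<or> j mod 4 = 0 then 1 else 0)"
definition Q1 :: "nat \<Rightarrow> nat \<Rightarrow> real" where
  "Q1 m i = (if m = i then dd m else if i < m then (if even m then sg m * uu i / sqrt 2 ^ m else 0)
     else (if even i then sg i * uu m / sqrt 2 ^ i else 0))"
definition muz :: "nat \<Rightarrow> real" where "muz R = (if R mod 4 = 2 \<or> R mod 4 = 3 then 1 else 0)"
definition mut :: "nat \<Rightarrow> real" where
  "mut m = (if m mod 4 = 2 then -1 else if m mod 4 = 3 then 1 else if m mod 4 = 0 then 2 else 0)"
definition tq :: "nat \<Rightarrow> nat \<Rightarrow> real" where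
  "tq m i = (if i < m then - uu i else if i = m then sqrt 2 ^ m else 0)"

lemma s2sq: "sqrt 2 ^ k * sqrt 2 ^ k = (2::real) ^ k"
  by (simp add: power_mult_distrib[symmetric])

lemma uu_sq: "uu i * uu i = 2 ^ max i 2"
  by (simp add: uu_def s2sq)

lemma sum_pow_max: "2 \<le> j \<Longrightarrow> (\<Sum>i\<in>{1..<j}. (2::real) ^ max i 2) = 2 ^ j"
proof (induction j rule: dec_induct)
  case base
  then show ?case by (simp add: numeral_2_eq_2)
next
  case (step j)
  have "{1..<Suc j} = insert j {1..<j}" using step by auto
  then show ?case using step by simp
qed

lemma sum_uu_sq: "2 \<le> j \<Longrightarrow> (\<Sum>i\<in>{1..<j}. uu i * uu i) = 2 ^ j"
  using sum_pow_max[of j] by (simp add: uu_sq)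

lemma even4: "even (j::nat) = (j mod 4 = 0 \<or> j mod 4 = 2)" by presburger

lemma sum_lower:
  assumes "j \<le> m"
  shows "(\<Sum>i\<in>{1..<j}. Q1 m i * uu i) = (if even m then sg m / sqrt 2 ^ m else 0) * (\<Sum>i\<in>{1..<j}. uu i * uu i)"
proof -
  have "(\<Sum>i\<in>{1..<j}. Q1 m i * uu i) = (\<Sum>i\<in>{1..<j}. (if even m then sg m / sqrt 2 ^ m else 0) * (uu i * uu i))"
    using assms by (intro sum.cong) (auto simp: Q1_def)
  also have "\<dots> = (if even m then sg m / sqrt 2 ^ m else 0) * (\<Sum>i\<in>{1..<j}. uu i * uu i)"
    by (simp add: sum_distrib_left)
  finally show ?thesis .
qed

lemma sum_lower2:
  assumes "2 \<le> j" "j \<le> m"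
  shows "(\<Sum>i\<in>{1..<j}. Q1 m i * uu i) = (if even m then sg m * 2 ^ j / sqrt 2 ^ m else 0)"
  using sum_lower[OF assms(2)] sum_uu_sq[OF assms(1)] by simp

lemma s2pow_div: "(2::real) ^ j / sqrt 2 ^ j = sqrt 2 ^ j"
  by (simp add: s2sq[symmetric])

lemma zsum:
  assumes "1 \<le> j" "j \<le> R"
  shows "(\<Sum>i\<in>{1..R}. Q1 j i * uu i) = muz R * uu j"
  using assms(2)
proof (induction R rule: dec_induct)
  case base
  have split: "{1..j} = insert j {1..<j}" using assms by auto
  show ?case
  proof (cases "j = 1")
    case True
    then show ?thesis by (simp add: Q1_def dd_def muz_def)
  next
    case False
    hence j2: "2 \<le> j" using assms by auto
    have "(\<Sum>i\<in>{1..j}. Q1 j i * uu i) = Q1 j j * uu j + (\<Sum>i\<in>{1..<j}. Q1 j i * uu i)"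
      unfolding split by (subst sum.insert) auto
    also have "\<dots> = dd j * sqrt 2 ^ j + (if even j then sg j * sqrt 2 ^ j else 0)"
    proof -
      have "sg j * 2 ^ j / sqrt 2 ^ j = sg j * sqrt 2 ^ j"
        using s2pow_div[of j] by (metis times_divide_eq_right)
      thus ?thesis using sum_lower2[OF j2 order_refl] j2 by (simp add: Q1_def uu_def max_def)
    qed
    also have "\<dots> = muz j * uu j"
      using j2 by (auto simp: uu_def max_def dd_def sg_def muz_def even4)
    finally show ?thesis .
  qed
next
  case (step R)
  have "(\<Sum>i\<in>{1..Suc R}. Q1 j i * uu i) = (\<Sum>i\<in>{1..R}. Q1 j i * uu i) + Q1 j (Suc R) * uu (Suc R)"
    by simp
  also have "Q1 j (Suc R) * uu (Suc R) = (if even (Suc R) then sg (Suc R) else 0) * uu j"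
  proof -
    have "Suc R \<ge> 2" using step assms by auto
    hence "uu (Suc R) = sqrt 2 ^ Suc R" by (simp add: uu_def max_def)
    thus ?thesis using step by (auto simp: Q1_def)
  qed
  also have "(\<Sum>i\<in>{1..R}. Q1 j i * uu i) = muz R * uu j" by (rule step.IH)
  also have "muz R * uu j + (if even (Suc R) then sg (Suc R) else 0) * uu j = muz (Suc R) * uu j"
    by (auto simp: muz_def sg_def even4 mod_Suc algebra_simps)
  finally show ?case .
qed

lemma sum_tq_restrict:
  assumes "2 \<le> m" "m \<le> R"
  shows "(\<Sum>i\<in>{1..R}. f i * tq m i) = f m * sqrt 2 ^ m - (\<Sum>i\<in>{1..<m}. f i * uu i)"
proof -
  have "(\<Sum>i\<in>{1..R}. f i * tq m i) = (\<Sum>i\<in>{1..m}. f i * tq m i)"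
    using assms by (intro sum.mono_neutral_right) (auto simp: tq_def)
  also have "{1..m} = insert m {1..<m}" using assms by auto
  also have "(\<Sum>i\<in>insert m {1..<m}. f i * tq m i) = f m * sqrt 2 ^ m + (\<Sum>i\<in>{1..<m}. f i * tq m i)"
    by (subst sum.insert) (auto simp: tq_def)
  also have "(\<Sum>i\<in>{1..<m}. f i * tq m i) = - (\<Sum>i\<in>{1..<m}. f i * uu i)"
    by (simp add: tq_def sum_negf[symmetric])
  finally show ?thesis by simp
qed

lemma tsum:
  assumes m: "2 \<le> m" "m \<le> R" and j: "1 \<le> j"
  shows "(\<Sum>i\<in>{1..R}. Q1 j i * tq m i) = mut m * tq m j"
proof -
  have S: "(\<Sum>i\<in>{1..R}. Q1 j i * tq m i) = Q1 j m * sqrt 2 ^ m - (\<Sum>i\<in>{1..<m}. Q1 j i * uu i)"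
    by (rule sum_tq_restrict[OF m])
  consider "j < m" | "j = m" | "j > m" by linarith
  then show ?thesis
  proof cases
    case 1
    have "{1..<m} = {1..m-1}" using m by auto
    hence L: "(\<Sum>i\<in>{1..<m}. Q1 j i * uu i) = muz (m-1) * uu j"
      using zsum[of j "m-1"] 1 j by simp
    have Q: "Q1 j m * sqrt 2 ^ m = (if even m then sg m else 0) * uu j"
      using 1 by (auto simp: Q1_def)
    have mu: "mut m = muz (m - 1) - (if even m then sg m else 0)"
    proof -
      obtain m' where "m = Suc m'" using m by (cases m) auto
      thus ?thesis by (auto simp: mut_def muz_def sg_def even4 mod_Suc)
    qed
    have tj: "tq m j = - uu j" using 1 by (simp add: tq_def)
    show ?thesis unfolding S L Q tj mu by (simp add: algebra_simps)
  next
    case 2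
    have "(\<Sum>i\<in>{1..<m}. Q1 j i * uu i) = (if even m then sg m * sqrt 2 ^ m else 0)"
      using sum_lower2[OF m(1) order_refl] 2 s2pow_div[of m] by (simp add: times_divide_eq_right[symmetric])
    then show ?thesis using S 2
      by (auto simp: tq_def Q1_def mut_def dd_def sg_def even4 algebra_simps)
  next
    case 3
    have "(\<Sum>i\<in>{1..<m}. Q1 j i * uu i) = (if even j then sg j * 2 ^ m / sqrt 2 ^ j else 0)"
      using sum_lower2[OF m(1)] 3 by simp
    moreover have "Q1 j m * sqrt 2 ^ m = (if even j then sg j * 2 ^ m / sqrt 2 ^ j else 0)"
      using 3 m by (auto simp: Q1_def uu_def max_def s2sq)
    ultimately show ?thesis using S 3 by (simp add: tq_def)
  qed
qed

lemma uorth: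
  assumes "2 \<le> m" "m \<le> R"
  shows "(\<Sum>i\<in>{1..R}. uu i * tq m i) = 0"
  using sum_tq_restrict[OF assms, of uu] sum_uu_sq[OF assms(1)] assms(1)
  by (simp add: uu_def max_def s2sq)

lemma tt_pointwise:
  assumes "m < m'"
  shows "tq m i * tq m' i = - (uu i * tq m i)"
  using assms by (auto simp: tq_def)



definition Sb :: "nat list \<Rightarrow> nat \<Rightarrow> nat" where "Sb a j = sum_list (take j a)"

lemma Sb_Suc: "j < length a \<Longrightarrow> Sb a (Suc j) = Sb a j + a ! j"
  by (simp add: Sb_def take_Suc_conv_app_nth)

lemma Sb_Suc_le: "Sb a j \<le> Sb a (Suc j)"
proof (cases "j < length a")
  case True thus ?thesis by (simp add: Sb_Suc)
next
  case False thus ?thesis by (simp add: Sb_def)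
qed

lemma Sb_mono: "i \<le> j \<Longrightarrow> Sb a i \<le> Sb a j"
  by (rule lift_Suc_mono_le[of "Sb a"]) (auto simp: Sb_Suc_le)

lemma Sb_0[simp]: "Sb a 0 = 0" by (simp add: Sb_def)
lemma Sb_len: "Sb a (length a) = nverts a" by (simp add: Sb_def nverts_def)

lemma Sb_strict: "\<forall>x\<in>set a. x \<ge> 1 \<Longrightarrow> j < length a \<Longrightarrow> Sb a j < Sb a (Suc j)"
proof -
  assume "\<forall>x\<in>set a. x \<ge> 1" "j < length a"
  hence "a ! j \<ge> 1" using nth_mem by blast
  thus ?thesis using Sb_Suc[OF \<open>j < length a\<close>] by simp
qed

lemma bag_props:
  assumes "v < nverts a"
  shows "1 \<le> bag a v" "bag a v \<le> length a" "Sb a (bag a v - 1) \<le> v" "v < Sb a (bag a v)"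
proof -
  have ex: "v < Sb a (length a)" using assms Sb_len by simp
  have lt: "v < Sb a (bag a v)" unfolding bag_def Sb_def[symmetric] by (rule LeastI[of _ "length a"]) (use ex in auto)
  thus "v < Sb a (bag a v)" .
  show "bag a v \<le> length a" unfolding bag_def Sb_def[symmetric] by (rule Least_le) (use ex in auto)
  show "1 \<le> bag a v" using lt by (cases "bag a v") auto
  show "Sb a (bag a v - 1) \<le> v"
  proof (rule ccontr)
    assume "\<not> Sb a (bag a v - 1) \<le> v"
    hence "v < Sb a (bag a v - 1)" by simp
    hence "bag a v \<le> bag a v - 1" unfolding bag_def Sb_def[symmetric] by (rule Least_le)
    thus False using lt by (cases "bag a v") auto
  qed
qed

lemma bag_eq:
  assumes "j < length a" "Sb a j \<le> v" "v < Sb a (Suc j)"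
  shows "bag a v = Suc j"
  unfolding bag_def Sb_def[symmetric]
proof (rule Least_equality)
  show "v < Sb a (Suc j)" by fact
  fix y assume "v < Sb a y"
  show "Suc j \<le> y"
  proof (rule ccontr)
    assume "\<not> Suc j \<le> y"
    hence "Sb a y \<le> Sb a j" by (intro Sb_mono) auto
    thus False using assms \<open>v < Sb a y\<close> by auto
  qed
qed

lemma in_bag_iff:
  assumes "v < nverts a" "j < length a"
  shows "bag a v = Suc j \<longleftrightarrow> Sb a j \<le> v \<and> v < Sb a (Suc j)"
  using bag_props[OF assms(1)] bag_eq[OF assms(2)] by auto

lemma Sb_le_n: "Sb a j \<le> nverts a"
proof (cases "j \<le> length a")
  case True thus ?thesis using Sb_mono[OF True, of a] Sb_len[of a] by simp
next
  case False thus ?thesis by (simp add: Sb_def nverts_def)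
qed

lemma group_gen: "(\<Sum>v<Sb a k. F v) = (\<Sum>j<k. \<Sum>v\<in>{Sb a j..<Sb a (Suc j)}. F v)"
proof (induction k)
  case (Suc k)
  have "(\<Sum>v<Sb a (Suc k). F v) = (\<Sum>v\<in>{0..<Sb a k}. F v) + (\<Sum>v\<in>{Sb a k..<Sb a (Suc k)}. F v)"
    by (subst sum.atLeastLessThan_concat) (auto simp: Sb_mono atLeast0LessThan)
  then show ?case using Suc by (simp add: atLeast0LessThan)
qed simp

lemma group_n: "(\<Sum>v<nverts a. F v) = (\<Sum>j<length a. \<Sum>v\<in>{Sb a j..<Sb a (Suc j)}. F v)"
  using group_gen[where a=a and k="length a" and F=F] by (simp add: Sb_len)

lemma group_bag:
  fixes G x :: "nat \<Rightarrow> real"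
  shows "(\<Sum>v<nverts a. G (bag a v) * x v) = (\<Sum>j<length a. G (Suc j) * (\<Sum>v\<in>{Sb a j..<Sb a (Suc j)}. x v))"
proof -
  have "(\<Sum>v<nverts a. G (bag a v) * x v) = (\<Sum>j<length a. \<Sum>v\<in>{Sb a j..<Sb a (Suc j)}. G (bag a v) * x v)"
    by (rule group_n)
  also have "\<dots> = (\<Sum>j<length a. \<Sum>v\<in>{Sb a j..<Sb a (Suc j)}. G (Suc j) * x v)"
    by (intro sum.cong refl) (auto simp: bag_eq)
  also have "\<dots> = (\<Sum>j<length a. G (Suc j) * (\<Sum>v\<in>{Sb a j..<Sb a (Suc j)}. x v))"
    by (rule sum.cong[OF refl]) (metis (no_types) sum_distrib_left)
  finally show ?thesis .
qed

lemma card_bag: "j < length a \<Longrightarrow> card {Sb a j..<Sb a (Suc j)} = a ! j"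
  by (simp add: Sb_Suc)

lemma sum_Suc_shift: "(\<Sum>j<r. f (Suc j)) = (\<Sum>i\<in>{1..r}. (f i :: 'b::comm_monoid_add))"
  by (induction r) (auto simp: add.commute)



definition Kf :: "real \<Rightarrow> nat list \<Rightarrow> nat \<Rightarrow> nat \<Rightarrow> real" where
  "Kf l a i j = (if i = j then epsb l a i else l * Q1 i j / sqrt (asz a i * asz a j))"

lemma eps1_eq:
  assumes "1 \<le> i" "i < j" "even j"
  shows "eps1 l i j = l * sg j * uu i / sqrt 2 ^ j"
proof -
  have j2: "2 \<le> j" using assms by presburger
  have le: "max i 2 \<le> j" using assms j2 by auto
  have pd: "sqrt 2 ^ (j - max i 2) = sqrt 2 ^ j / sqrt 2 ^ max i 2"
    using le by (simp add: power_diff)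
  have ne: "sqrt 2 ^ max i 2 \<noteq> 0" "sqrt (2::real) ^ j \<noteq> 0" by auto
  show ?thesis
  proof (cases "i = 1 \<and> j = 2")
    case True thus ?thesis by (simp add: eps1_def sg_def uu_def)
  next
    case False
    thus ?thesis using assms ne unfolding eps1_def Let_def pd
      by (auto simp: sg_def uu_def even4 field_simps)
  qed
qed

lemma epsb_odd: "odd i \<Longrightarrow> epsb l a i = 0"
  by (auto simp: epsb_def even4)

lemma Mthr_entry:
  assumes u: "u < nverts a" and v: "v < nverts a"
  shows "Mthr l a $$ (u,v) = (if u = v then pdiag l a (bag a u) else Kf l a (bag a u) (bag a v))"
proof -
  have b1: "1 \<le> bag a u" "1 \<le> bag a v" using bag_props u v by auto
  show ?thesis
    using u v b1 unfolding Mthr_def Kf_def Let_def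
    by (auto simp: epsb_odd eps1_eq Q1_def mult.commute)
qed

lemma Mact:
  assumes u: "u < nverts a" and x: "x \<in> carrier_vec (nverts a)"
  shows "(Mthr l a *\<^sub>v x) $ u = (pdiag l a (bag a u) - epsb l a (bag a u)) * x $ u
     + (\<Sum>j<length a. Kf l a (bag a u) (Suc j) * (\<Sum>v\<in>{Sb a j..<Sb a (Suc j)}. x $ v))"
proof -
  let ?n = "nverts a" and ?m = "bag a u"
  have dM: "dim_row (Mthr l a) = ?n" "dim_col (Mthr l a) = ?n" by (auto simp: Mthr_def)
  have "(Mthr l a *\<^sub>v x) $ u = (\<Sum>v<?n. Mthr l a $$ (u,v) * x $ v)"
    using u x dM by (simp add: scalar_prod_def row_def atLeast0LessThan)
  also have "\<dots> = (\<Sum>v<?n. (if v = u then pdiag l a ?m - epsb l a ?m else 0) * x $ v + Kf l a ?m (bag a v) * x $ v)"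
    by (intro sum.cong refl) (auto simp: Mthr_entry u Kf_def algebra_simps)
  also have "\<dots> = (pdiag l a ?m - epsb l a ?m) * x $ u + (\<Sum>v<?n. Kf l a ?m (bag a v) * x $ v)"
    using u by (simp add: sum.distrib if_distrib[of "\<lambda>z. z * _"] sum.delta cong: if_cong)
  also have "(\<Sum>v<?n. Kf l a ?m (bag a v) * x $ v) = (\<Sum>j<length a. Kf l a ?m (Suc j) * (\<Sum>v\<in>{Sb a j..<Sb a (Suc j)}. x $ v))"
    by (rule group_bag)
  finally show ?thesis .
qed

definition lifted :: "nat list \<Rightarrow> (nat \<Rightarrow> real) \<Rightarrow> nat \<Rightarrow> real" where
  "lifted a g v = g (bag a v) / sqrt (asz a (bag a v))"

lemma asz_pos: "\<forall>x\<in>set a. x \<ge> 1 \<Longrightarrow> 1 \<le> i \<Longrightarrow> i \<le> length a \<Longrightarrow> asz a i > 0"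
  unfolding asz_def using nth_mem[of "i - 1" a] by fastforce

lemma bagsum_lifted:
  assumes "j < length a"
  shows "(\<Sum>v\<in>{Sb a j..<Sb a (Suc j)}. lifted a g v) = sqrt (asz a (Suc j)) * g (Suc j)"
proof -
  have "(\<Sum>v\<in>{Sb a j..<Sb a (Suc j)}. lifted a g v) = (\<Sum>v\<in>{Sb a j..<Sb a (Suc j)}. g (Suc j) / sqrt (asz a (Suc j)))"
    using assms by (intro sum.cong refl) (auto simp: lifted_def bag_eq)
  also have "\<dots> = asz a (Suc j) * (g (Suc j) / sqrt (asz a (Suc j)))"
    using card_bag[OF assms] by (simp add: asz_def)
  also have "\<dots> = sqrt (asz a (Suc j)) * g (Suc j)"
  proof -
    have "asz a (Suc j) / sqrt (asz a (Suc j)) = sqrt (asz a (Suc j))" by (rule real_div_sqrt) (simp add: asz_def)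
    thus ?thesis by (metis mult.commute times_divide_eq_left times_divide_eq_right)
  qed
  finally show ?thesis .
qed

lemma bagsum_vec:
  "(\<Sum>v\<in>{Sb a j..<Sb a (Suc j)}. vec (nverts a) f $ v) = (\<Sum>v\<in>{Sb a j..<Sb a (Suc j)}. f v)"
  using Sb_le_n[of a "Suc j"] by (intro sum.cong refl) auto

lemma pe_id:
  assumes "asz a m > 0"
  shows "pdiag l a m - epsb l a m + epsb l a m * asz a m - l * dd m = 0"
  using assms by (auto simp: pdiag_def epsb_def dd_def field_simps)

lemma Mlift:
  assumes pos: "\<forall>x\<in>set a. x \<ge> 1" and u: "u < nverts a"
  shows "(Mthr l a *\<^sub>v vec (nverts a) (lifted a g)) $ u
     = l * (\<Sum>i\<in>{1..length a}. Q1 (bag a u) i * g i) / sqrt (asz a (bag a u))"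
proof -
  let ?m = "bag a u" and ?r = "length a"
  have m: "1 \<le> ?m" "?m \<le> ?r" using bag_props[OF u] by auto
  define al where "al = asz a ?m"
  have al: "al > 0" using asz_pos[OF pos m] by (simp add: al_def)
  define be where "be = sqrt al"
  have be: "be > 0" "be * be = al" using al by (auto simp: be_def)
  have "(Mthr l a *\<^sub>v vec (nverts a) (lifted a g)) $ u
     = (pdiag l a ?m - epsb l a ?m) * (g ?m / be)
     + (\<Sum>j<?r. Kf l a ?m (Suc j) * (sqrt (asz a (Suc j)) * g (Suc j)))"
  proof -
    have "(\<Sum>j<?r. Kf l a ?m (Suc j) * (\<Sum>v\<in>{Sb a j..<Sb a (Suc j)}. vec (nverts a) (lifted a g) $ v))
       = (\<Sum>j<?r. Kf l a ?m (Suc j) * (sqrt (asz a (Suc j)) * g (Suc j)))"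
      by (intro sum.cong refl) (simp add: bagsum_vec bagsum_lifted)
    moreover have "vec (nverts a) (lifted a g) $ u = g ?m / be" using u by (simp add: lifted_def be_def al_def)
    ultimately show ?thesis using u by (subst Mact) auto
  qed
  also have "(\<Sum>j<?r. Kf l a ?m (Suc j) * (sqrt (asz a (Suc j)) * g (Suc j)))
      = (\<Sum>i\<in>{1..?r}. Kf l a ?m i * (sqrt (asz a i) * g i))"
    by (rule sum_Suc_shift)
  also have "\<dots> = (\<Sum>i\<in>{1..?r}. l * Q1 ?m i * g i / be
        + (if i = ?m then (epsb l a ?m * be - l * dd ?m / be) * g ?m else 0))"
  proof (intro sum.cong refl)
    fix i assume i: "i \<in> {1..?r}"
    have ai: "asz a i > 0" using asz_pos[OF pos] i by auto
    show "Kf l a ?m i * (sqrt (asz a i) * g i) = l * Q1 ?m i * g i / be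
        + (if i = ?m then (epsb l a ?m * be - l * dd ?m / be) * g ?m else 0)"
    proof (cases "i = ?m")
      case True
      then show ?thesis using be by (simp add: Kf_def Q1_def al_def be_def field_simps)
    next
      case False
      have "sqrt (asz a ?m * asz a i) = be * sqrt (asz a i)" by (simp add: be_def al_def real_sqrt_mult)
      then show ?thesis using False be ai by (simp add: Kf_def field_simps)
    qed
  qed
  also have "\<dots> = l * (\<Sum>i\<in>{1..?r}. Q1 ?m i * g i) / be + (epsb l a ?m * be - l * dd ?m / be) * g ?m"
    using m by (simp add: sum.distrib sum.delta sum_divide_distrib sum_distrib_left mult.assoc)
  finally have eq: "(Mthr l a *\<^sub>v vec (nverts a) (lifted a g)) $ u = (pdiag l a ?m - epsb l a ?m) * (g ?m / be) +
    (l * (\<Sum>i\<in>{1..?r}. Q1 ?m i * g i) / be + (epsb l a ?m * be - l * dd ?m / be) * g ?m)" .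
  have z: "(pdiag l a ?m - epsb l a ?m) * (g ?m / be) + (epsb l a ?m * be - l * dd ?m / be) * g ?m
     = (pdiag l a ?m - epsb l a ?m + epsb l a ?m * al - l * dd ?m) * g ?m / be"
    unfolding be(2)[symmetric] using be(1) by (simp add: field_simps)
  have "(Mthr l a *\<^sub>v vec (nverts a) (lifted a g)) $ u = l * (\<Sum>i\<in>{1..?r}. Q1 ?m i * g i) / be"
    using eq z pe_id[of a ?m l] al unfolding al_def by simp
  thus ?thesis by (simp add: be_def al_def)
qed



definition off :: "nat list \<Rightarrow> nat \<Rightarrow> nat" where "off a v = v - Sb a (bag a v - 1)"

definition hx :: "nat list \<Rightarrow> nat \<Rightarrow> nat \<Rightarrow> real" where
  "hx a w v = (if bag a v = bag a w \<and> v < w then 1 else if v = w then - real (off a w) else 0)"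

lemma bagsum_hx:
  assumes w: "w < nverts a" and j: "j < length a"
  shows "(\<Sum>v\<in>{Sb a j..<Sb a (Suc j)}. hx a w v) = 0"
proof (cases "bag a w = Suc j")
  case False
  have "hx a w v = 0" if "v \<in> {Sb a j..<Sb a (Suc j)}" for v
  proof -
    have "bag a v = Suc j" using that j bag_eq by auto
    thus ?thesis using False by (auto simp: hx_def)
  qed
  thus ?thesis by simp
next
  case True
  have wr: "Sb a j \<le> w" "w < Sb a (Suc j)" using bag_props[OF w] True by auto
  have "(\<Sum>v\<in>{Sb a j..<Sb a (Suc j)}. hx a w v)
     = (\<Sum>v\<in>{Sb a j..<Sb a (Suc j)}. (if v < w then 1 else 0) + (if v = w then - real (off a w) else 0))"
    using True j by (intro sum.cong refl) (auto simp: hx_def bag_eq)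
  also have "\<dots> = (\<Sum>v\<in>{Sb a j..<Sb a (Suc j)}. (if v < w then 1 else 0)) - real (off a w)"
    using wr by (simp add: sum.distrib)
  also have "(\<Sum>v\<in>{Sb a j..<Sb a (Suc j)}. (if v < w then 1 else (0::real))) = (\<Sum>v\<in>{Sb a j..<w}. 1)"
  proof -
    have "{v\<in>{Sb a j..<Sb a (Suc j)}. v < w} = {Sb a j..<w}" using wr by auto
    thus ?thesis using sum.inter_filter[of "{Sb a j..<Sb a (Suc j)}" "\<lambda>_. (1::real)" "\<lambda>v. v < w"] by simp
  qed
  also have "\<dots> = real (off a w)" using True wr by (simp add: off_def)
  finally show ?thesis by simp
qed

lemma total_hx: "w < nverts a \<Longrightarrow> (\<Sum>v<nverts a. hx a w v) = 0"
  using group_bag[of "\<lambda>_. 1" a "hx a w"] bagsum_hx by simp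

lemma kap_id:
  assumes "asz a m > 0"
  shows "pdiag l a m - epsb l a m = l * (if m mod 4 = 2 \<or> m mod 4 = 3 then 1 else 0)"
  using assms by (auto simp: pdiag_def epsb_def field_simps)

lemma hx_nz_bag: "hx a w v \<noteq> 0 \<Longrightarrow> bag a v = bag a w"
  by (auto simp: hx_def split: if_splits)

lemma Mhx:
  assumes pos: "\<forall>x\<in>set a. x \<ge> 1" and w: "w < nverts a" and u: "u < nverts a"
  shows "(Mthr l a *\<^sub>v vec (nverts a) (hx a w)) $ u
     = l * (if bag a w mod 4 = 2 \<or> bag a w mod 4 = 3 then 1 else 0) * hx a w u"
proof -
  have "(Mthr l a *\<^sub>v vec (nverts a) (hx a w)) $ u = (pdiag l a (bag a u) - epsb l a (bag a u)) * hx a w u"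
    using u w by (subst Mact) (auto simp: bagsum_vec bagsum_hx)
  also have "\<dots> = l * (if bag a w mod 4 = 2 \<or> bag a w mod 4 = 3 then 1 else 0) * hx a w u"
  proof (cases "hx a w u = 0")
    case False
    hence b: "bag a u = bag a w" by (rule hx_nz_bag)
    have "asz a (bag a u) > 0" using asz_pos[OF pos] bag_props[OF u] by auto
    thus ?thesis using kap_id b by simp
  qed simp
  finally show ?thesis .
qed

lemma lifted_dot:
  assumes pos: "\<forall>x\<in>set a. x \<ge> 1"
  shows "(\<Sum>v<nverts a. lifted a g v * lifted a h v) = (\<Sum>i\<in>{1..length a}. g i * h i)"
proof -
  have "(\<Sum>v<nverts a. lifted a g v * lifted a h v) = (\<Sum>v<nverts a. (\<lambda>i. g i * h i / asz a i) (bag a v) * 1)"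
  proof (intro sum.cong refl)
    fix v assume "v \<in> {..<nverts a}"
    hence "asz a (bag a v) > 0" using asz_pos[OF pos] bag_props by auto
    thus "lifted a g v * lifted a h v = (\<lambda>i. g i * h i / asz a i) (bag a v) * 1"
      by (simp add: lifted_def)
  qed
  also have "\<dots> = (\<Sum>j<length a. g (Suc j) * h (Suc j) / asz a (Suc j) * (\<Sum>v\<in>{Sb a j..<Sb a (Suc j)}. 1))"
    by (rule group_bag)
  also have "\<dots> = (\<Sum>j<length a. g (Suc j) * h (Suc j))"
  proof (intro sum.cong refl)
    fix j assume j: "j \<in> {..<length a}"
    hence "asz a (Suc j) > 0" using asz_pos[OF pos, of "Suc j"] by auto
    thus "g (Suc j) * h (Suc j) / asz a (Suc j) * (\<Sum>v\<in>{Sb a j..<Sb a (Suc j)}. 1) = g (Suc j) * h (Suc j)"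
      using card_bag[of j a] j by (simp add: asz_def)
  qed
  also have "\<dots> = (\<Sum>i\<in>{1..length a}. g i * h i)" by (rule sum_Suc_shift)
  finally show ?thesis .
qed

lemma lifted_hx:
  assumes w: "w < nverts a"
  shows "(\<Sum>v<nverts a. lifted a g v * hx a w v) = 0"
proof -
  have "(\<Sum>v<nverts a. lifted a g v * hx a w v) = (\<Sum>v<nverts a. (\<lambda>i. g i / sqrt (asz a i)) (bag a v) * hx a w v)"
    by (simp add: lifted_def)
  also have "\<dots> = 0" by (subst group_bag) (simp add: bagsum_hx w)
  finally show ?thesis .
qed

lemma hx_hx:
  assumes w: "w < nverts a" and ww: "w < w'"
  shows "(\<Sum>v<nverts a. hx a w v * hx a w' v) = 0"
proof (cases "bag a w = bag a w'")
  case True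
  have pw: "hx a w v * hx a w' v = hx a w v" for v
  proof (cases "hx a w v = 0")
    case False
    hence "bag a v = bag a w" "v \<le> w" by (auto simp: hx_def split: if_splits)
    hence "hx a w' v = 1" using True ww by (auto simp: hx_def)
    thus ?thesis by simp
  qed simp
  have "(\<Sum>v<nverts a. hx a w v * hx a w' v) = (\<Sum>v<nverts a. hx a w v)"
    by (rule sum.cong[OF refl]) (rule pw)
  thus ?thesis using total_hx[OF w] by simp
next
  case False
  have pw: "hx a w v * hx a w' v = 0" for v
    using False hx_nz_bag[of a w v] hx_nz_bag[of a w' v] by fastforce
  have "(\<Sum>v<nverts a. hx a w v * hx a w' v) = (\<Sum>v<nverts a. 0)"
    by (rule sum.cong[OF refl]) (rule pw)
  thus ?thesis by simp
qed



definition gq :: "nat \<Rightarrow> nat \<Rightarrow> real" where "gq m = (if m = 1 then uu else tq m)"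

definition xf :: "nat list \<Rightarrow> nat \<Rightarrow> nat \<Rightarrow> real" where
  "xf a w = (if off a w = 0 then lifted a (gq (bag a w)) else hx a w)"

definition kap :: "nat \<Rightarrow> real" where "kap m = (if m mod 4 = 2 \<or> m mod 4 = 3 then 1 else 0)"

definition evf :: "real \<Rightarrow> nat list \<Rightarrow> nat \<Rightarrow> real" where
  "evf l a w = (if off a w = 0 then l * (if bag a w = 1 then muz (length a) else mut (bag a w))
     else l * kap (bag a w))"

lemma gq_eig:
  assumes "1 \<le> m" "m \<le> R" "1 \<le> j" "j \<le> R"
  shows "(\<Sum>i\<in>{1..R}. Q1 j i * gq m i) = (if m = 1 then muz R else mut m) * gq m j"
  using assms zsum[of j R] tsum[of m R j] by (auto simp: gq_def)

lemma gq_orth: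
  assumes "1 \<le> m" "m \<le> R" "1 \<le> m'" "m' \<le> R" "m \<noteq> m'"
  shows "(\<Sum>i\<in>{1..R}. gq m i * gq m' i) = 0"
proof -
  have key: "(\<Sum>i\<in>{1..R}. gq m i * gq m' i) = 0" if "m < m'" "1 \<le> m" "m' \<le> R" for m m'
  proof (cases "m = 1")
    case True
    then show ?thesis using uorth[of m' R] that by (simp add: gq_def)
  next
    case False
    have "(\<Sum>i\<in>{1..R}. gq m i * gq m' i) = - (\<Sum>i\<in>{1..R}. uu i * tq m i)"
      using False that by (simp add: gq_def tt_pointwise sum_negf)
    also have "\<dots> = 0" using uorth[of m R] False that by simp
    finally show ?thesis .
  qed
  show ?thesis
  proof (cases "m < m'")
    case True thus ?thesis using key assms by simp
  next
    case False
    hence "m' < m" using assms by simp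
    thus ?thesis using key[of m' m] assms by (simp add: mult.commute)
  qed
qed

lemma xf_eig:
  assumes pos: "\<forall>x\<in>set a. x \<ge> 1" and w: "w < nverts a"
  shows "Mthr l a *\<^sub>v vec (nverts a) (xf a w) = evf l a w \<cdot>\<^sub>v vec (nverts a) (xf a w)"
proof (rule eq_vecI)
  show "dim_vec (Mthr l a *\<^sub>v vec (nverts a) (xf a w)) = dim_vec (evf l a w \<cdot>\<^sub>v vec (nverts a) (xf a w))"
    by (simp add: Mthr_def)
  fix u assume "u < dim_vec (evf l a w \<cdot>\<^sub>v vec (nverts a) (xf a w))"
  hence u: "u < nverts a" by simp
  have bw: "1 \<le> bag a w" "bag a w \<le> length a" using bag_props[OF w] by auto
  have bu: "1 \<le> bag a u" "bag a u \<le> length a" using bag_props[OF u] by auto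
  show "(Mthr l a *\<^sub>v vec (nverts a) (xf a w)) $ u = (evf l a w \<cdot>\<^sub>v vec (nverts a) (xf a w)) $ u"
  proof (cases "off a w = 0")
    case True
    have "(Mthr l a *\<^sub>v vec (nverts a) (xf a w)) $ u
        = l * (\<Sum>i\<in>{1..length a}. Q1 (bag a u) i * gq (bag a w) i) / sqrt (asz a (bag a u))"
      using True Mlift[OF pos u] by (simp add: xf_def)
    also have "\<dots> = evf l a w * xf a w u"
      using gq_eig[OF bw bu] True by (simp add: evf_def xf_def lifted_def)
    finally show ?thesis using u by simp
  next
    case False
    thus ?thesis using Mhx[OF pos w u] u by (simp add: xf_def evf_def kap_def)
  qed
qed

lemma off0_eq: "w < nverts a \<Longrightarrow> off a w = 0 \<Longrightarrow> w = Sb a (bag a w - 1)"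
  using bag_props[of w a] by (auto simp: off_def)

lemma xf_orth:
  assumes pos: "\<forall>x\<in>set a. x \<ge> 1" and w: "w < nverts a" and w': "w' < nverts a" and ne: "w \<noteq> w'"
  shows "(\<Sum>v<nverts a. xf a w v * xf a w' v) = 0"
proof -
  have bw: "1 \<le> bag a w" "bag a w \<le> length a" using bag_props[OF w] by auto
  have bw': "1 \<le> bag a w'" "bag a w' \<le> length a" using bag_props[OF w'] by auto
  show ?thesis
  proof (cases "off a w = 0")
    case T1: True
    show ?thesis
    proof (cases "off a w' = 0")
      case True
      have "bag a w \<noteq> bag a w'" using off0_eq[OF w T1] off0_eq[OF w' True] ne by metis
      thus ?thesis using T1 True lifted_dot[OF pos] gq_orth[OF bw bw'] by (simp add: xf_def)
    next
      case False
      thus ?thesis using T1 lifted_hx[OF w'] by (simp add: xf_def)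
    qed
  next
    case F1: False
    show ?thesis
    proof (cases "off a w' = 0")
      case True
      have "(\<Sum>v<nverts a. hx a w v * lifted a (gq (bag a w')) v) = (\<Sum>v<nverts a. lifted a (gq (bag a w')) v * hx a w v)"
        by (rule sum.cong[OF refl]) (rule mult.commute)
      thus ?thesis using True F1 lifted_hx[OF w] by (simp add: xf_def)
    next
      case False
      show ?thesis
      proof (cases "w < w'")
        case True thus ?thesis using F1 False hx_hx[OF w] by (simp add: xf_def)
      next
        case F3: False
        hence "w' < w" using ne by simp
        moreover have "(\<Sum>v<nverts a. hx a w v * hx a w' v) = (\<Sum>v<nverts a. hx a w' v * hx a w v)"
          by (rule sum.cong[OF refl]) (rule mult.commute)
        ultimately show ?thesis using F1 False hx_hx[OF w'] by (simp add: xf_def)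
      qed
    qed
  qed
qed

lemma xf_nz:
  assumes pos: "\<forall>x\<in>set a. x \<ge> 1" and w: "w < nverts a"
  shows "xf a w w \<noteq> 0"
proof -
  have bw: "1 \<le> bag a w" "bag a w \<le> length a" using bag_props[OF w] by auto
  have "asz a (bag a w) > 0" using asz_pos[OF pos bw] .
  thus ?thesis using bw
    by (auto simp: xf_def lifted_def hx_def gq_def uu_def tq_def)
qed

lemma sq_sum_pos:
  fixes f :: "nat \<Rightarrow> real"
  assumes "w < n" "f w \<noteq> 0"
  shows "(\<Sum>v<n. f v * f v) \<noteq> 0"
proof -
  have "f w * f w \<le> (\<Sum>v<n. f v * f v)"
    using assms by (intro member_le_sum) auto
  moreover have "f w * f w > 0" using assms not_real_square_gt_zero by blast
  ultimately show ?thesis by linarith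
qed

lemma charpoly_Mthr:
  assumes pos: "\<forall>x\<in>set a. x \<ge> 1"
  shows "char_poly (Mthr l a) = (\<Prod>w\<leftarrow>[0..<nverts a]. [:- evf l a w, 1:])"
proof (rule diag_charpoly[where vs = "\<lambda>w. vec (nverts a) (xf a w)"])
  show "Mthr l a \<in> carrier_mat (nverts a) (nverts a)" by (simp add: Mthr_def)
  show "\<And>w. w < nverts a \<Longrightarrow> vec (nverts a) (xf a w) \<in> carrier_vec (nverts a)" by simp
  show "\<And>w. w < nverts a \<Longrightarrow> Mthr l a *\<^sub>v vec (nverts a) (xf a w) = evf l a w \<cdot>\<^sub>v vec (nverts a) (xf a w)"
    by (rule xf_eig[OF pos])
  show "vec (nverts a) (xf a w) \<bullet> vec (nverts a) (xf a w') = 0"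
    if "w < nverts a" "w' < nverts a" "w \<noteq> w'" for w w'
    using xf_orth[OF pos that] by (simp add: scalar_prod_def atLeast0LessThan)
  show "vec (nverts a) (xf a w) \<bullet> vec (nverts a) (xf a w) \<noteq> 0" if "w < nverts a" for w
    using sq_sum_pos[where f="xf a w", OF that xf_nz[OF pos that]] by (simp add: scalar_prod_def atLeast0LessThan)
qed



definition firstv :: "real \<Rightarrow> nat \<Rightarrow> nat \<Rightarrow> real" where
  "firstv l r i = l * (if i = 1 then muz r else mut i)"

lemma card_ind: "card {w. w < (n::nat) \<and> P w} = (\<Sum>w<n. if P w then 1 else (0::nat))"
proof -
  have "{w. w < n \<and> P w} = {w\<in>{..<n}. P w}" by auto
  thus ?thesis using sum.inter_filter[OF finite_lessThan[of n], where g="\<lambda>_. (1::nat)" and P=P] by simp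
qed

lemma bag_count:
  assumes pos: "\<forall>x\<in>set a. x \<ge> 1" and j: "j < length a"
  shows "(\<Sum>v\<in>{Sb a j..<Sb a (Suc j)}. if evf l a v = x then 1 else (0::nat))
    = (if firstv l (length a) (Suc j) = x then 1 else 0) + (a ! j - 1) * (if l * kap (Suc j) = x then 1 else 0)"
proof -
  have lt: "Sb a j < Sb a (Suc j)" using Sb_strict[OF pos j] .
  have I: "{Sb a j..<Sb a (Suc j)} = insert (Sb a j) {Suc (Sb a j)..<Sb a (Suc j)}" using lt by auto
  have first: "evf l a (Sb a j) = firstv l (length a) (Suc j)"
  proof -
    have "bag a (Sb a j) = Suc j" using bag_eq[OF j] lt by simp
    thus ?thesis by (simp add: evf_def off_def firstv_def)
  qed
  have rest: "evf l a v = l * kap (Suc j)" if "v \<in> {Suc (Sb a j)..<Sb a (Suc j)}" for v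
  proof -
    have "bag a v = Suc j" using bag_eq[OF j] that by simp
    thus ?thesis using that by (simp add: evf_def off_def)
  qed
  have "(\<Sum>v\<in>{Sb a j..<Sb a (Suc j)}. if evf l a v = x then 1 else (0::nat))
     = (if evf l a (Sb a j) = x then 1 else 0) + (\<Sum>v\<in>{Suc (Sb a j)..<Sb a (Suc j)}. if evf l a v = x then 1 else 0)"
    unfolding I by (subst sum.insert) auto
  also have "(\<Sum>v\<in>{Suc (Sb a j)..<Sb a (Suc j)}. if evf l a v = x then 1 else (0::nat))
     = (\<Sum>v\<in>{Suc (Sb a j)..<Sb a (Suc j)}. if l * kap (Suc j) = x then 1 else 0)"
    by (intro sum.cong refl) (simp add: rest)
  also have "\<dots> = (a ! j - 1) * (if l * kap (Suc j) = x then 1 else 0)"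
    using Sb_Suc[OF j] by simp
  finally show ?thesis using first by simp
qed

lemma order_count:
  assumes pos: "\<forall>x\<in>set a. x \<ge> 1"
  shows "order x (char_poly (Mthr l a)) =
     (\<Sum>i\<in>{1..length a}. if firstv l (length a) i = x then 1 else 0)
   + (\<Sum>i\<in>{1..length a}. (a ! (i - 1) - 1) * (if l * kap i = x then 1 else 0))"
proof -
  have "order x (char_poly (Mthr l a)) = card {w. w < nverts a \<and> evf l a w = x}"
    by (simp add: charpoly_Mthr[OF pos] order_prod_lin)
  also have "\<dots> = (\<Sum>w<nverts a. if evf l a w = x then 1 else 0)" by (rule card_ind)
  also have "\<dots> = (\<Sum>j<length a. \<Sum>v\<in>{Sb a j..<Sb a (Suc j)}. if evf l a v = x then 1 else 0)"
    by (rule group_n)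
  also have "\<dots> = (\<Sum>j<length a. (if firstv l (length a) (Suc j) = x then 1 else 0) + (a ! j - 1) * (if l * kap (Suc j) = x then 1 else 0))"
    by (intro sum.cong refl) (simp add: bag_count[OF pos])
  also have "\<dots> = (\<Sum>i\<in>{1..length a}. (if firstv l (length a) i = x then 1 else 0) + (a ! (i - 1) - 1) * (if l * kap i = x then 1 else 0))"
    using sum_Suc_shift[of "\<lambda>i. (if firstv l (length a) i = x then 1 else 0) + (a ! (i - 1) - 1) * (if l * kap i = x then 1 else 0)" "length a"]
    by simp
  finally show ?thesis by (simp add: sum.distrib)
qed

lemma cnt_step:
  "(\<Sum>i\<in>{1..Suc r}. if 2 \<le> i \<and> i mod 4 = \<rho> then 1 else (0::nat))
     = (\<Sum>i\<in>{1..r}. if 2 \<le> i \<and> i mod 4 = \<rho> then 1 else (0::nat)) + (if 2 \<le> Suc r \<and> Suc r mod 4 = \<rho> then 1 else 0)"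
  by simp

lemma m4: "(r::nat) mod 4 = 0 \<or> r mod 4 = 1 \<or> r mod 4 = 2 \<or> r mod 4 = 3" by arith

lemma cnt0: "(\<Sum>i\<in>{1..r}. if 2 \<le> i \<and> i mod 4 = 0 then 1 else (0::nat)) = r div 4"
proof (induction r)
  case (Suc r)
  show ?case unfolding cnt_step Suc using m4[of r] by (auto simp: div_Suc mod_Suc)
qed simp

lemma cnt1: "(\<Sum>i\<in>{1..r}. if 2 \<le> i \<and> i mod 4 = 1 then 1 else (0::nat)) = (if r mod 4 = 0 then r div 4 - 1 else r div 4)"
proof (induction r)
  case (Suc r)
  show ?case unfolding cnt_step Suc using m4[of r] by (auto simp: div_Suc mod_Suc)
qed simp

lemma cnt2: "(\<Sum>i\<in>{1..r}. if 2 \<le> i \<and> i mod 4 = 2 then 1 else (0::nat)) = r div 4 + (if r mod 4 \<ge> 2 then 1 else 0)"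
proof (induction r)
  case (Suc r)
  show ?case unfolding cnt_step Suc using m4[of r] by (auto simp: div_Suc mod_Suc)
qed simp

lemma cnt3: "(\<Sum>i\<in>{1..r}. if 2 \<le> i \<and> i mod 4 = 3 then 1 else (0::nat)) = r div 4 + (if r mod 4 = 3 then 1 else 0)"
proof (induction r)
  case (Suc r)
  show ?case unfolding cnt_step Suc using m4[of r] by (auto simp: div_Suc mod_Suc)
qed simp

lemma T1_split:
  assumes "l \<noteq> 0" "1 \<le> r"
  shows "(\<Sum>i\<in>{1..r}. if firstv l r i = l * c then 1 else (0::nat))
     = (if muz r = c then 1 else 0) + (\<Sum>i\<in>{1..r}. if 2 \<le> i \<and> mut i = c then 1 else 0)"
proof -
  have "(\<Sum>i\<in>{1..r}. if firstv l r i = l * c then 1 else (0::nat))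
     = (\<Sum>i\<in>{1..r}. (if i = 1 then (if muz r = c then 1 else 0) else 0) + (if 2 \<le> i \<and> mut i = c then 1 else 0))"
    using assms by (intro sum.cong refl) (auto simp: firstv_def)
  also have "\<dots> = (if muz r = c then 1 else 0) + (\<Sum>i\<in>{1..r}. if 2 \<le> i \<and> mut i = c then 1 else 0)"
    using assms by (simp add: sum.distrib)
  finally show ?thesis .
qed

lemma T1_other:
  assumes "\<forall>c\<in>{-1,0,1,2}. x \<noteq> l * c"
  shows "(\<Sum>i\<in>{1..r}. if firstv l r i = x then 1 else (0::nat)) = 0"
  using assms by (intro sum.neutral) (auto simp: firstv_def muz_def mut_def)

lemma T2_other:
  assumes "x \<noteq> 0" "x \<noteq> l"
  shows "(\<Sum>i\<in>{1..r}. (a ! (i - 1) - 1) * (if l * kap i = x then 1 else (0::nat))) = 0"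
  using assms by (intro sum.neutral) (auto simp: kap_def)

lemma T2_0:
  assumes "l \<noteq> 0"
  shows "(\<Sum>i\<in>{1..r}. (a ! (i - 1) - 1) * (if l * kap i = 0 then 1 else (0::nat)))
    = (\<Sum>i\<in>{i\<in>{1..r}. i mod 4 = 0 \<or> i mod 4 = 1}. a ! (i - 1) - 1)"
  using assms by (subst sum.inter_filter) (auto simp: kap_def intro!: sum.cong)

lemma T2_l:
  assumes "l \<noteq> 0"
  shows "(\<Sum>i\<in>{1..r}. (a ! (i - 1) - 1) * (if l * kap i = l then 1 else (0::nat)))
    = (\<Sum>i\<in>{i\<in>{1..r}. i mod 4 = 2 \<or> i mod 4 = 3}. a ! (i - 1) - 1)"
  using assms by (subst sum.inter_filter) (auto simp: kap_def intro!: sum.cong)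



lemma Q1_sym: "Q1 i j = Q1 j i" by (auto simp: Q1_def)

lemma Kf_sym: "Kf l a i j = Kf l a j i" by (auto simp: Kf_def Q1_sym mult.commute)

lemma Q1_nz: "i \<noteq> j \<Longrightarrow> (Q1 i j \<noteq> 0) = even (max i j)"
  by (auto simp: Q1_def sg_def uu_def max_def)

lemma epsb_nz: "asz a i > 0 \<Longrightarrow> l \<noteq> 0 \<Longrightarrow> (epsb l a i \<noteq> 0) = even i"
  by (auto simp: epsb_def even4)

lemma Mthr_inS:
  assumes pos: "\<forall>x\<in>set a. x \<ge> 1" and l: "l \<noteq> 0"
  shows "in_S (nverts a) (thr_adj a) (Mthr l a)"
  unfolding in_S_def
proof (intro conjI allI impI)
  show "Mthr l a \<in> carrier_mat (nverts a) (nverts a)" by (simp add: Mthr_def)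
  show "transpose_mat (Mthr l a) = Mthr l a"
  proof (rule eq_matI)
    fix i j assume "i < dim_row (Mthr l a)" "j < dim_col (Mthr l a)"
    hence i: "i < nverts a" and j: "j < nverts a" by (auto simp: Mthr_def)
    have d: "dim_row (Mthr l a) = nverts a" "dim_col (Mthr l a) = nverts a" by (simp_all add: Mthr_def)
    have "transpose_mat (Mthr l a) $$ (i, j) = Mthr l a $$ (j, i)" using i j d by simp
    also have "\<dots> = Mthr l a $$ (i, j)" using i j by (simp add: Mthr_entry Kf_sym)
    finally show "transpose_mat (Mthr l a) $$ (i, j) = Mthr l a $$ (i, j)" .
  qed (auto simp: Mthr_def)
  fix i j assume i: "i < nverts a" and j: "j < nverts a" and ne: "i \<noteq> j"
  have bi: "1 \<le> bag a i" "bag a i \<le> length a" using bag_props[OF i] by auto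
  have bj: "1 \<le> bag a j" "bag a j \<le> length a" using bag_props[OF j] by auto
  have ai: "asz a (bag a i) > 0" using asz_pos[OF pos bi] .
  have aj: "asz a (bag a j) > 0" using asz_pos[OF pos bj] .
  have "Mthr l a $$ (i, j) = Kf l a (bag a i) (bag a j)" using i j ne by (simp add: Mthr_entry)
  moreover have "(Kf l a (bag a i) (bag a j) \<noteq> 0) = even (max (bag a i) (bag a j))"
  proof (cases "bag a i = bag a j")
    case True thus ?thesis using epsb_nz[OF ai l] by (simp add: Kf_def)
  next
    case False
    have "sqrt (asz a (bag a i) * asz a (bag a j)) > 0" using ai aj by simp
    thus ?thesis using False Q1_nz[OF False] l ai aj by (simp add: Kf_def)
  qed
  ultimately show "(Mthr l a $$ (i, j) \<noteq> 0) = thr_adj a i j" using ne by (simp add: thr_adj_def)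
qed

theorem mainTheorem7:
  fixes l :: real and a :: "nat list"
  assumes "l \<noteq> 0" and "length a \<ge> 1" and "\<forall>x\<in>set a. x \<ge> 1"
  defines "r \<equiv> length a"
  defines "k \<equiv> r div 4" and "q \<equiv> r mod 4"
  defines "A \<equiv> (\<Sum>i\<in>{i\<in>{1..r}. i mod 4 = 0 \<or> i mod 4 = 1}. a ! (i - 1) - 1)"
  defines "B \<equiv> (\<Sum>i\<in>{i\<in>{1..r}. i mod 4 = 2 \<or> i mod 4 = 3}. a ! (i - 1) - 1)"
  shows "in_S (nverts a) (thr_adj a) (Mthr l a) \<and>
    (\<forall>x. order x (char_poly (Mthr l a)) =
       (if x = - l then (if q = 0 \<or> q = 1 then k else k + 1)
        else if x = 0 then (if q = 1 then A + k + 1 else A + k)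
        else if x = l then (if q = 0 \<or> q = 1 then B + k else if q = 2 then B + k + 1 else B + k + 2)
        else if x = 2 * l then k
        else 0))"
proof (intro conjI allI)
  note l = assms(1) and r1 = assms(2) and pos = assms(3)
  show "in_S (nverts a) (thr_adj a) (Mthr l a)" by (rule Mthr_inS[OF pos l])
  fix x
  let ?T1 = "\<lambda>x. (\<Sum>i\<in>{1..length a}. if firstv l (length a) i = x then 1 else (0::nat))"
  let ?T2 = "\<lambda>x. (\<Sum>i\<in>{1..length a}. (a ! (i - 1) - 1) * (if l * kap i = x then 1 else (0::nat)))"
  have oc: "order x (char_poly (Mthr l a)) = ?T1 x + ?T2 x" by (rule order_count[OF pos])
  have T1: "?T1 (l * c) = (if muz r = c then 1 else 0) + (\<Sum>i\<in>{1..r}. if 2 \<le> i \<and> mut i = c then 1 else 0)" for c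
    using T1_split[OF l r1] unfolding r_def .
  have mm1: "(\<Sum>i\<in>{1..r}. if 2 \<le> i \<and> mut i = -1 then 1 else (0::nat)) = k + (if q \<ge> 2 then 1 else 0)"
    unfolding k_def q_def cnt2[symmetric] by (intro sum.cong refl) (auto simp: mut_def)
  have m0: "(\<Sum>i\<in>{1..r}. if 2 \<le> i \<and> mut i = 0 then 1 else (0::nat)) = (if q = 0 then k - 1 else k)"
    unfolding k_def q_def cnt1[symmetric] by (intro sum.cong refl) (auto simp: mut_def)
  have m1: "(\<Sum>i\<in>{1..r}. if 2 \<le> i \<and> mut i = 1 then 1 else (0::nat)) = k + (if q = 3 then 1 else 0)"
    unfolding k_def q_def cnt3[symmetric] by (intro sum.cong refl) (auto simp: mut_def)
  have m2: "(\<Sum>i\<in>{1..r}. if 2 \<le> i \<and> mut i = 2 then 1 else (0::nat)) = k"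
    unfolding k_def cnt0[symmetric] by (intro sum.cong refl) (auto simp: mut_def)
  have q4: "q < 4" unfolding q_def by simp
  have kq: "q = 0 \<Longrightarrow> k \<ge> 1" using r1 unfolding k_def q_def r_def by presburger
  have muzq: "muz r = (if q = 2 \<or> q = 3 then 1 else 0)" by (simp add: muz_def q_def)
  show "order x (char_poly (Mthr l a)) =
       (if x = - l then (if q = 0 \<or> q = 1 then k else k + 1)
        else if x = 0 then (if q = 1 then A + k + 1 else A + k)
        else if x = l then (if q = 0 \<or> q = 1 then B + k else if q = 2 then B + k + 1 else B + k + 2)
        else if x = 2 * l then k
        else 0)"
  proof -
    consider "x = l * (-1)" | "x = l * 0" | "x = l * 1" | "x = l * 2" | "\<forall>c\<in>{-1,0,1,2}. x \<noteq> l * c" by force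
    then show ?thesis
    proof cases
      case 1
      have "?T2 x = 0" using l 1 by (intro T2_other) auto
      moreover have "?T1 x = k + (if q \<ge> 2 then 1 else 0)" using 1 T1[of "-1"] mm1 muzq unfolding r_def by simp
      ultimately show ?thesis using oc 1 q4 by auto
    next
      case 2
      have "?T2 x = A" using 2 T2_0[OF l] unfolding A_def r_def by simp
      moreover have "?T1 x = (if q = 2 \<or> q = 3 then 0 else 1) + (if q = 0 then k - 1 else k)"
        using 2 T1[of 0] m0 muzq unfolding r_def by simp
      ultimately show ?thesis using oc 2 l kq q4 by auto
    next
      case 3
      have "?T2 x = B" using 3 T2_l[OF l] unfolding B_def r_def by simp
      moreover have "?T1 x = (if q = 2 \<or> q = 3 then 1 else 0) + k + (if q = 3 then 1 else 0)"
        using 3 T1[of 1] m1 muzq unfolding r_def by simp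
      ultimately show ?thesis using oc 3 l q4 by auto
    next
      case 4
      have "?T2 x = 0" using l 4 by (intro T2_other) auto
      moreover have "?T1 x = k" using 4 T1[of 2] m2 muzq unfolding r_def by simp
      ultimately show ?thesis using oc 4 l by auto
    next
      case 5
      have "?T2 x = 0" using 5 by (intro T2_other) auto
      moreover have "?T1 x = 0" using 5 by (rule T1_other)
      ultimately show ?thesis using oc 5 by auto
    qed
  qed
qed

end
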